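(* The formulas $$\forall \mathbf{V} N\big(\mathit{Atleast}^{\mathbf{X};\mathbf{V}}_F(\mathbf{V},N) \leftrightarrow \exists\mathbf{X}\,\mathit{Start}^{\mathbf{X};\mathbf{V}}_F(\mathbf{X},\mathbf{V},N)\big)$$ and $$\forall \mathbf{V} N\big(\mathit{Atmost}^{\mathbf{X};\mathbf{V}}_F(\mathbf{V},N) \leftrightarrow \neg\mathit{Atleast}^{\mathbf{X};\mathbf{V}}_F(\mathbf{V},N+\overline 1)\big)$$ are provable in the deductive system $\mathit{HT}_{\#}$.
   Context: Formulas are over a two-sorted signature $\sigma_2$ with sorts general and integer (integer a subsort of general). It contains: numerals $\overline n$ (integer constants), other precomputed terms (general constants), $|\cdot|,+,-,\times$ on integers, predicate constants $p/n$ (general arguments), comparison predicates $=,\neq,<,>,\leq,\geq$, and, for disjoint lists $\mathbf{X},\mathbf{V}$ of distinct general variables and a formula $F$ over $\sigma_0$ (the signature without Atleast/Atmost/Start) with free variables among $\mathbf{X},\mathbf{V}$, predicate constants $\mathit{Atleast}^{\mathbf{X};\mathbf{V}}_F$, $\mathit{Atmost}^{\mathbf{X};\mathbf{V}}_F$ (arity $|\mathbf{V}|+1$, general arguments) and $\mathit{Start}^{\mathbf{X};\mathbf{V}}_F$ (arity $|\mathbf{X}|+|\mathbf{V}|+1$, last argument integer). $N$ is an integer variable, $Y$ a general variable. $\mathit{HT}_{\#}$ is first-order intuitionistic logic over $\sigma_2$ extended by: the schemas $F\lor(F\to G)\lor\neg G$ and $\exists X(F\to\forall X F)$; Std, the set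 of sentences over $\sigma_0$ not containing predicates $p/n$ that are true in standard interpretations (general domain = precomputed terms, integer domain = numerals, constants denote themselves, arithmetic as usual, comparisons follow the fixed total order on precomputed terms in which numerals are contiguous and ordered as integers); Ind, the universal closures of $F^N_{\overline 0}\land\forall N(N\geq\overline 0\land F\to F^N_{N+\overline 1})\to\forall N(N\geq\overline 0\to F)$ for all $F$ over $\sigma_2$; $D_0$: $\forall\mathbf{X}\mathbf{V}N(N\leq\overline 0\to\mathit{Start}^{\mathbf{X};\mathbf{V}}_F(\mathbf{X},\mathbf{V},N))$, $\forall\mathbf{X}\mathbf{V}(\mathit{Start}^{\mathbf{X};\mathbf{V}}_F(\mathbf{X},\mathbf{V},\overline 1)\leftrightarrow F)$, $\forall\mathbf{X}\mathbf{V}N(N>\overline 0\to(\mathit{Start}^{\mathbf{X};\mathbf{V}}_F(\mathbf{X},\mathbf{V},N+\overline 1)\leftrightarrow F\land\exists\mathbf{U}(\mathbf{X}<\mathbf{U}\land\mathit{Start}^{\mathbf{X};\mathbf{V}}_F(\mathbf{U},\mathbf{V},N))))$ with $<$ lexicographic order on tuples and $\mathbf{U}$ fresh; $D_1$: $\forall\mathbf{V}Y(\mathit{Atleast}^{\mathbf{X};\mathbf{V}}_F(\mathbf{V},Y)\leftrightarrow\exists\mathbf{X}N(\mathit{Start}^{\mathbf{X};\mathbf{V}}_F(\mathbf{X},\mathbf{V},N)\land N\geq Y))$ and $\forall\mathbf{V}Y(\mathit{Atmost}^{\mathbf{X};\mathbf{V}}_F(\mathbf{V},Y)\leftrightarrow\forall\mathbf{X}N(\mathit{Start}^{\mathbf{X};\mathbf{V}}_F(\mathbf{X},\mathbf{V},N)\to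 N\leq Y))$. *)

theory Defs
  imports Main "HOL-Library.Char_ord" "HOL-Library.List_Lexorder"
begin

section \<open>Precomputed terms and their fixed total order\<close>

text \<open>General constants: the precomputed terms other than numerals
  (inf, symbolic constants, sup).  Values of the standard interpretation
  are numerals (integers) or general constants.\<close>

datatype gconst = CInf | CSym string | CSup
datatype pval = VNum int | VCon gconst

fun prank :: "pval \<Rightarrow> nat" where
  "prank (VCon CInf) = 0"
| "prank (VNum _) = 1"
| "prank (VCon (CSym _)) = 2"
| "prank (VCon CSup) = 3"

definition pless :: "pval \<Rightarrow> pval \<Rightarrow> bool" where
  "pless a b \<longleftrightarrow> prank a < prank b \<or>
     (prank a = prank b \<and>
       (case (a, b) of (VNum i, VNum j) \<Rightarrow> i < j
         | (VCon (CSym s), VCon (CSym t)) \<Rightarrow> s < t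
         | _ \<Rightarrow> False))"

datatype var = VG nat | VI nat

datatype iterm = IV nat | INum int | IAbs iterm
  | IPlus iterm iterm | IMinus iterm iterm | ITimes iterm iterm

datatype gterm = GV nat | GCon gconst | GI iterm

datatype cmp = Eq | Neq | Lt | Gt | Le | Ge

text \<open>Atom p n ts: predicate constant p/n applied to ts.
  AtLeast X V F ts, AtMost X V F ts, Start X V F ts: the predicate constants
  indexed by the general-variable lists X, V and the sigma_0 formula F.\<close>
datatype form = Bot
  | Atom string nat "gterm list"
  | AtLeast "nat list" "nat list" form "gterm list"
  | AtMost "nat list" "nat list" form "gterm list"
  | Start "nat list" "nat list" form "gterm list"
  | Cmp cmp gterm gterm
  | And form form | Or form form | Imp form form
  | All var form | Ex var form

definition Neg :: "form \<Rightarrow> form" where "Neg F = Imp F Bot"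
definition Iff :: "form \<Rightarrow> form \<Rightarrow> form" where "Iff F G = And (Imp F G) (Imp G F)"
definition allL :: "var list \<Rightarrow> form \<Rightarrow> form" where "allL vs F = foldr All vs F"
definition exL :: "var list \<Rightarrow> form \<Rightarrow> form" where "exL vs F = foldr Ex vs F"
definition num :: "int \<Rightarrow> gterm" where "num k = GI (INum k)"
definition ivar :: "nat \<Rightarrow> gterm" where "ivar n = GI (IV n)"
definition succ :: "nat \<Rightarrow> gterm" where "succ n = GI (IPlus (IV n) (INum 1))"

fun ivars :: "iterm \<Rightarrow> var set" where
  "ivars (IV n) = {VI n}"
| "ivars (INum _) = {}"
| "ivars (IAbs t) = ivars t"
| "ivars (IPlus a b) = ivars a \<union> ivars b"
| "ivars (IMinus a b) = ivars a \<union> ivars b"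
| "ivars (ITimes a b) = ivars a \<union> ivars b"

fun gvars :: "gterm \<Rightarrow> var set" where
  "gvars (GV n) = {VG n}"
| "gvars (GCon _) = {}"
| "gvars (GI t) = ivars t"

text \<open>Free variables; the index formula of AtLeast/AtMost/Start is part of the
  predicate symbol and contributes no free variables.\<close>
fun fv :: "form \<Rightarrow> var set" where
  "fv Bot = {}"
| "fv (Atom _ _ ts) = \<Union>(gvars ` set ts)"
| "fv (AtLeast _ _ _ ts) = \<Union>(gvars ` set ts)"
| "fv (AtMost _ _ _ ts) = \<Union>(gvars ` set ts)"
| "fv (Start _ _ _ ts) = \<Union>(gvars ` set ts)"
| "fv (Cmp _ a b) = gvars a \<union> gvars b"
| "fv (And F G) = fv F \<union> fv G"
| "fv (Or F G) = fv F \<union> fv G"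
| "fv (Imp F G) = fv F \<union> fv G"
| "fv (All v F) = fv F - {v}"
| "fv (Ex v F) = fv F - {v}"

fun isubst :: "nat \<Rightarrow> iterm \<Rightarrow> iterm \<Rightarrow> iterm" where
  "isubst n s (IV m) = (if m = n then s else IV m)"
| "isubst n s (INum k) = INum k"
| "isubst n s (IAbs t) = IAbs (isubst n s t)"
| "isubst n s (IPlus a b) = IPlus (isubst n s a) (isubst n s b)"
| "isubst n s (IMinus a b) = IMinus (isubst n s a) (isubst n s b)"
| "isubst n s (ITimes a b) = ITimes (isubst n s a) (isubst n s b)"

fun gsubst :: "var \<Rightarrow> gterm \<Rightarrow> gterm \<Rightarrow> gterm" where
  "gsubst (VG n) t (GV m) = (if m = n then t else GV m)"
| "gsubst (VI n) t (GV m) = GV m"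
| "gsubst v t (GCon c) = GCon c"
| "gsubst (VG n) t (GI s) = GI s"
| "gsubst (VI n) t (GI s) = GI (case t of GI r \<Rightarrow> isubst n r s | _ \<Rightarrow> s)"

fun fits :: "var \<Rightarrow> gterm \<Rightarrow> bool" where
  "fits (VG _) t = True"
| "fits (VI _) t = (\<exists>s. t = GI s)"

fun subst :: "var \<Rightarrow> gterm \<Rightarrow> form \<Rightarrow> form" where
  "subst v t Bot = Bot"
| "subst v t (Atom p k ts) = Atom p k (map (gsubst v t) ts)"
| "subst v t (AtLeast X V F ts) = AtLeast X V F (map (gsubst v t) ts)"
| "subst v t (AtMost X V F ts) = AtMost X V F (map (gsubst v t) ts)"
| "subst v t (Start X V F ts) = Start X V F (map (gsubst v t) ts)"
| "subst v t (Cmp c a b) = Cmp c (gsubst v t a) (gsubst v t b)"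
| "subst v t (And F G) = And (subst v t F) (subst v t G)"
| "subst v t (Or F G) = Or (subst v t F) (subst v t G)"
| "subst v t (Imp F G) = Imp (subst v t F) (subst v t G)"
| "subst v t (All w F) = (if w = v then All w F else All w (subst v t F))"
| "subst v t (Ex w F) = (if w = v then Ex w F else Ex w (subst v t F))"

fun free_for :: "gterm \<Rightarrow> var \<Rightarrow> form \<Rightarrow> bool" where
  "free_for t v (And F G) = (free_for t v F \<and> free_for t v G)"
| "free_for t v (Or F G) = (free_for t v F \<and> free_for t v G)"
| "free_for t v (Imp F G) = (free_for t v F \<and> free_for t v G)"
| "free_for t v (All w F) = (w = v \<or> ((v \<notin> fv F \<or> w \<notin> gvars t) \<and> free_for t v F))"
| "free_for t v (Ex w F) = (w = v \<or> ((v \<notin> fv F \<or> w \<notin> gvars t) \<and> free_for t v F))"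
| "free_for t v _ = True"

fun sigma0 :: "form \<Rightarrow> bool" where
  "sigma0 (AtLeast _ _ _ _) = False"
| "sigma0 (AtMost _ _ _ _) = False"
| "sigma0 (Start _ _ _ _) = False"
| "sigma0 (And F G) = (sigma0 F \<and> sigma0 G)"
| "sigma0 (Or F G) = (sigma0 F \<and> sigma0 G)"
| "sigma0 (Imp F G) = (sigma0 F \<and> sigma0 G)"
| "sigma0 (All _ F) = sigma0 F"
| "sigma0 (Ex _ F) = sigma0 F"
| "sigma0 _ = True"

fun pure :: "form \<Rightarrow> bool" where
  "pure (Atom _ _ _) = False"
| "pure (AtLeast _ _ _ _) = False"
| "pure (AtMost _ _ _ _) = False"
| "pure (Start _ _ _ _) = False"
| "pure (And F G) = (pure F \<and> pure G)"
| "pure (Or F G) = (pure F \<and> pure G)"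
| "pure (Imp F G) = (pure F \<and> pure G)"
| "pure (All _ F) = pure F"
| "pure (Ex _ F) = pure F"
| "pure _ = True"

fun is_int :: "gterm \<Rightarrow> bool" where
  "is_int (GI _) = True"
| "is_int _ = False"

fun wf :: "form \<Rightarrow> bool" where
  "wf Bot = True"
| "wf (Atom p k ts) = (length ts = k)"
| "wf (AtLeast X V F ts) = (distinct X \<and> distinct V \<and> set X \<inter> set V = {} \<and> sigma0 F \<and> wf F
      \<and> fv F \<subseteq> VG ` (set X \<union> set V) \<and> length ts = length V + 1)"
| "wf (AtMost X V F ts) = (distinct X \<and> distinct V \<and> set X \<inter> set V = {} \<and> sigma0 F \<and> wf F
      \<and> fv F \<subseteq> VG ` (set X \<union> set V) \<and> length ts = length V + 1)"
| "wf (Start X V F ts) = (distinct X \<and> distinct V \<and> set X \<inter> set V = {} \<and> sigma0 F \<and> wf F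
      \<and> fv F \<subseteq> VG ` (set X \<union> set V) \<and> length ts = length X + length V + 1 \<and> is_int (last ts))"
| "wf (Cmp _ _ _) = True"
| "wf (And F G) = (wf F \<and> wf G)"
| "wf (Or F G) = (wf F \<and> wf G)"
| "wf (Imp F G) = (wf F \<and> wf G)"
| "wf (All _ F) = wf F"
| "wf (Ex _ F) = wf F"

definition adm :: "nat list \<Rightarrow> nat list \<Rightarrow> form \<Rightarrow> bool" where
  "adm X V F \<longleftrightarrow> distinct X \<and> distinct V \<and> set X \<inter> set V = {} \<and> sigma0 F \<and> wf F
      \<and> fv F \<subseteq> VG ` (set X \<union> set V)"

section \<open>Standard interpretation\<close>

fun ival :: "(nat \<Rightarrow> int) \<Rightarrow> iterm \<Rightarrow> int" where
  "ival ai (IV n) = ai n"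
| "ival ai (INum k) = k"
| "ival ai (IAbs t) = \<bar>ival ai t\<bar>"
| "ival ai (IPlus a b) = ival ai a + ival ai b"
| "ival ai (IMinus a b) = ival ai a - ival ai b"
| "ival ai (ITimes a b) = ival ai a * ival ai b"

fun gval :: "(nat \<Rightarrow> pval) \<Rightarrow> (nat \<Rightarrow> int) \<Rightarrow> gterm \<Rightarrow> pval" where
  "gval ag ai (GV n) = ag n"
| "gval ag ai (GCon c) = VCon c"
| "gval ag ai (GI t) = VNum (ival ai t)"

fun cmpv :: "cmp \<Rightarrow> pval \<Rightarrow> pval \<Rightarrow> bool" where
  "cmpv Eq a b = (a = b)"
| "cmpv Neq a b = (a \<noteq> b)"
| "cmpv Lt a b = pless a b"
| "cmpv Gt a b = pless b a"
| "cmpv Le a b = (pless a b \<or> a = b)"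
| "cmpv Ge a b = (pless b a \<or> a = b)"

text \<open>Classical truth in the standard interpretation (predicate atoms are
  irrelevant here: only used for formulas without predicate constants).\<close>
fun sat :: "(nat \<Rightarrow> pval) \<Rightarrow> (nat \<Rightarrow> int) \<Rightarrow> form \<Rightarrow> bool" where
  "sat ag ai (Cmp c a b) = cmpv c (gval ag ai a) (gval ag ai b)"
| "sat ag ai (And F G) = (sat ag ai F \<and> sat ag ai G)"
| "sat ag ai (Or F G) = (sat ag ai F \<or> sat ag ai G)"
| "sat ag ai (Imp F G) = (sat ag ai F \<longrightarrow> sat ag ai G)"
| "sat ag ai (All (VG n) F) = (\<forall>d. sat (ag(n := d)) ai F)"
| "sat ag ai (All (VI n) F) = (\<forall>k. sat ag (ai(n := k)) F)"
| "sat ag ai (Ex (VG n) F) = (\<exists>d. sat (ag(n := d)) ai F)"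
| "sat ag ai (Ex (VI n) F) = (\<exists>k. sat ag (ai(n := k)) F)"
| "sat ag ai _ = False"

definition Std :: "form set" where
  "Std = {F. wf F \<and> sigma0 F \<and> pure F \<and> fv F = {} \<and> (\<forall>ag ai. sat ag ai F)}"

section \<open>The deductive system HT_#\<close>

fun lexless :: "nat list \<Rightarrow> nat list \<Rightarrow> form" where
  "lexless (x # xs) (u # us) =
     Or (Cmp Lt (GV x) (GV u)) (And (Cmp Eq (GV x) (GV u)) (lexless xs us))"
| "lexless _ _ = Bot"

text \<open>Hilbert-style intuitionistic first-order logic with equality (two sorts,
  integer a subsort of general), plus the HT_# axioms.  Axioms are open formulas;
  the generalization rule makes them equivalent to their universal closures.\<close>
inductive prov :: "form \<Rightarrow> bool" where
  ax_K: "wf A \<Longrightarrow> wf B \<Longrightarrow> prov (Imp A (Imp B A))"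
| ax_S: "wf A \<Longrightarrow> wf B \<Longrightarrow> wf C \<Longrightarrow>
     prov (Imp (Imp A (Imp B C)) (Imp (Imp A B) (Imp A C)))"
| ax_andE1: "wf A \<Longrightarrow> wf B \<Longrightarrow> prov (Imp (And A B) A)"
| ax_andE2: "wf A \<Longrightarrow> wf B \<Longrightarrow> prov (Imp (And A B) B)"
| ax_andI: "wf A \<Longrightarrow> wf B \<Longrightarrow> prov (Imp A (Imp B (And A B)))"
| ax_orI1: "wf A \<Longrightarrow> wf B \<Longrightarrow> prov (Imp A (Or A B))"
| ax_orI2: "wf A \<Longrightarrow> wf B \<Longrightarrow> prov (Imp B (Or A B))"
| ax_orE: "wf A \<Longrightarrow> wf B \<Longrightarrow> wf C \<Longrightarrow>
     prov (Imp (Imp A C) (Imp (Imp B C) (Imp (Or A B) C)))"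
| ax_botE: "wf A \<Longrightarrow> prov (Imp Bot A)"
| ax_allE: "wf F \<Longrightarrow> fits v t \<Longrightarrow> free_for t v F \<Longrightarrow> prov (Imp (All v F) (subst v t F))"
| ax_exI: "wf F \<Longrightarrow> fits v t \<Longrightarrow> free_for t v F \<Longrightarrow> prov (Imp (subst v t F) (Ex v F))"
| ax_eqrefl: "prov (Cmp Eq t t)"
| ax_eqsub: "wf F \<Longrightarrow> fits v s \<Longrightarrow> fits v t \<Longrightarrow> free_for s v F \<Longrightarrow> free_for t v F \<Longrightarrow>
     prov (Imp (Cmp Eq s t) (Imp (subst v s F) (subst v t F)))"
| r_mp: "prov A \<Longrightarrow> prov (Imp A B) \<Longrightarrow> prov B"
| r_allI: "prov (Imp B A) \<Longrightarrow> v \<notin> fv B \<Longrightarrow> prov (Imp B (All v A))"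
| r_exE: "prov (Imp A B) \<Longrightarrow> v \<notin> fv B \<Longrightarrow> prov (Imp (Ex v A) B)"
| r_gen: "prov A \<Longrightarrow> prov (All v A)"
| ax_ht: "wf F \<Longrightarrow> wf G \<Longrightarrow> prov (Or F (Or (Imp F G) (Neg G)))"
| ax_sqex: "wf F \<Longrightarrow> prov (Ex v (Imp F (All v F)))"
| ax_std: "F \<in> Std \<Longrightarrow> prov F"
| ax_ind: "wf F \<Longrightarrow> prov (Imp
     (And (subst (VI n) (num 0) F)
          (All (VI n) (Imp (And (Cmp Ge (ivar n) (num 0)) F) (subst (VI n) (succ n) F))))
     (All (VI n) (Imp (Cmp Ge (ivar n) (num 0)) F)))"
| ax_d0a: "adm X V F \<Longrightarrow> prov (allL (map VG X @ map VG V @ [VI n])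
     (Imp (Cmp Le (ivar n) (num 0)) (Start X V F (map GV X @ map GV V @ [ivar n]))))"
| ax_d0b: "adm X V F \<Longrightarrow> prov (allL (map VG X @ map VG V)
     (Iff (Start X V F (map GV X @ map GV V @ [num 1])) F))"
| ax_d0c: "adm X V F \<Longrightarrow> length U = length X \<Longrightarrow> distinct U \<Longrightarrow>
     set U \<inter> (set X \<union> set V) = {} \<Longrightarrow>
     prov (allL (map VG X @ map VG V @ [VI n])
       (Imp (Cmp Gt (ivar n) (num 0))
         (Iff (Start X V F (map GV X @ map GV V @ [succ n]))
              (And F (exL (map VG U)
                 (And (lexless X U) (Start X V F (map GV U @ map GV V @ [ivar n]))))))))"
| ax_d1a: "adm X V F \<Longrightarrow> y \<notin> set X \<union> set V \<Longrightarrow>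
     prov (allL (map VG V @ [VG y])
       (Iff (AtLeast X V F (map GV V @ [GV y]))
            (exL (map VG X @ [VI n])
               (And (Start X V F (map GV X @ map GV V @ [ivar n])) (Cmp Ge (ivar n) (GV y))))))"
| ax_d1b: "adm X V F \<Longrightarrow> y \<notin> set X \<union> set V \<Longrightarrow>
     prov (allL (map VG V @ [VG y])
       (Iff (AtMost X V F (map GV V @ [GV y]))
            (allL (map VG X @ [VI n])
               (Imp (Start X V F (map GV X @ map GV V @ [ivar n])) (Cmp Le (ivar n) (GV y))))))"

end

theory Submission
  imports Defs
begin



lemma is_int_gsubst: "is_int s \<Longrightarrow> is_int (gsubst v t s)"
  by (cases s; cases v; simp)

lemma wf_subst: "wf F \<Longrightarrow> wf (subst v t F)"
proof (induction F)
  case (Start X V G ts)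
  then have "ts \<noteq> []" by auto
  then show ?case using Start by (simp add: last_map is_int_gsubst)
qed auto

lemma allL_Nil[simp]: "allL [] A = A" and allL_Cons[simp]: "allL (v#vs) A = All v (allL vs A)"
  and allL_append[simp]: "allL (xs@ys) A = allL xs (allL ys A)"
  by (simp_all add: allL_def)
lemma exL_Nil[simp]: "exL [] A = A" and exL_Cons[simp]: "exL (v#vs) A = Ex v (exL vs A)"
  and exL_append[simp]: "exL (xs@ys) A = exL xs (exL ys A)"
  by (simp_all add: exL_def)

lemma wf_allL[simp]: "wf (allL vs A) = wf A" by (induction vs) auto
lemma wf_exL[simp]: "wf (exL vs A) = wf A" by (induction vs) auto

lemma wf_lexless[simp]: "wf (lexless X U)"
  by (induction X U rule: lexless.induct) auto

lemma prov_wf: "prov A \<Longrightarrow> wf A"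
proof (induction rule: prov.induct)
  case (ax_ind F n)
  then show ?case by (simp add: wf_subst)
next
qed (auto simp: wf_subst Neg_def Std_def adm_def Iff_def ivar_def num_def succ_def)



fun vt :: "var \<Rightarrow> gterm" where "vt (VG n) = GV n" | "vt (VI n) = GI (IV n)"

lemma fits_vt[simp]: "fits v (vt v)" by (cases v) auto
lemma gvars_vt[simp]: "gvars (vt v) = {v}" by (cases v) auto

lemma isubst_id[simp]: "isubst n (IV n) s = s" by (induction s) auto
lemma gsubst_id[simp]: "gsubst v (vt v) s = s"
  by (cases v; cases s) auto

lemma subst_id[simp]: "subst v (vt v) F = F"
  by (induction F) (auto simp: map_idI)

lemma free_for_id[simp]: "free_for (vt v) v F"
  by (induction F) auto

lemma isubst_noop: "VI n \<notin> ivars s \<Longrightarrow> isubst n r s = s" by (induction s) auto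
lemma gsubst_noop: "v \<notin> gvars s \<Longrightarrow> gsubst v t s = s"
  by (cases v; cases s) (auto simp: isubst_noop split: gterm.split)

lemma map_gsubst_noop: "(\<forall>s\<in>set ss. v \<notin> gvars s) \<Longrightarrow> map (gsubst v t) ss = ss"
  by (induction ss) (auto simp: gsubst_noop)

lemma subst_noop: "v \<notin> fv F \<Longrightarrow> subst v t F = F"
  by (induction F) (auto simp: map_gsubst_noop gsubst_noop)

lemma free_for_noop: "v \<notin> fv F \<Longrightarrow> free_for t v F"
  by (induction F) auto

lemma fv_allL[simp]: "fv (allL vs A) = fv A - set vs" by (induction vs) auto
lemma fv_exL[simp]: "fv (exL vs A) = fv A - set vs" by (induction vs) auto

lemma subst_allL[simp]: "v \<notin> set vs \<Longrightarrow> subst v t (allL vs A) = allL vs (subst v t A)"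
  by (induction vs) auto
lemma subst_exL[simp]: "v \<notin> set vs \<Longrightarrow> subst v t (exL vs A) = exL vs (subst v t A)"
  by (induction vs) auto
lemma free_for_exL[simp]: "\<forall>w\<in>set vs. w \<notin> gvars t \<Longrightarrow> free_for t v A \<Longrightarrow> free_for t v (exL vs A)"
  by (induction vs) auto
lemma free_for_allL[simp]: "\<forall>w\<in>set vs. w \<notin> gvars t \<Longrightarrow> free_for t v A \<Longrightarrow> free_for t v (allL vs A)"
  by (induction vs) auto

lemma subst_lexless[simp]: "subst (VI k) t (lexless X U) = lexless X U"
  by (induction X U rule: lexless.induct) auto
lemma free_for_lexless[simp]: "free_for t v (lexless X U)"
  by (induction X U rule: lexless.induct) auto

lemma finite_ivars: "finite (ivars s)" by (induction s) auto
lemma finite_gvars: "finite (gvars s)" by (cases s) (auto simp: finite_ivars)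
lemma finite_fv: "finite (fv F)" by (induction F) (auto simp: finite_gvars)

lemma sigma0_allL[simp]: "sigma0 (allL vs A) = sigma0 A" by (induction vs) auto
lemma pure_allL[simp]: "pure (allL vs A) = pure A" by (induction vs) auto
lemma sat_allL: "\<forall>ag ai. sat ag ai F \<Longrightarrow> sat ag ai (allL vs F)"
proof (induction vs arbitrary: ag ai)
  case (Cons v vs) then show ?case by (cases v) auto
qed auto



lemma imp_refl: "wf A \<Longrightarrow> prov (Imp A A)"
proof -
  assume w: "wf A"
  have 1: "prov (Imp (Imp A (Imp (Imp A A) A)) (Imp (Imp A (Imp A A)) (Imp A A)))"
    using w by (intro ax_S) auto
  have 2: "prov (Imp A (Imp (Imp A A) A))" using w by (intro ax_K) auto
  have 3: "prov (Imp A (Imp A A))" using w by (intro ax_K) auto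
  show ?thesis using r_mp[OF 3 r_mp[OF 2 1]] .
qed

lemma weak: "prov A \<Longrightarrow> wf B \<Longrightarrow> prov (Imp B A)"
proof -
  assume a: "prov A" "wf B"
  have "wf A" using prov_wf[OF a(1)] .
  then show ?thesis using a r_mp ax_K by blast
qed

lemma mp_under: "prov (Imp G A) \<Longrightarrow> prov (Imp G (Imp A C)) \<Longrightarrow> prov (Imp G C)"
proof -
  assume a: "prov (Imp G A)" and b: "prov (Imp G (Imp A C))"
  have w: "wf G" "wf A" "wf C" using prov_wf[OF a] prov_wf[OF b] by auto
  have "prov (Imp (Imp G (Imp A C)) (Imp (Imp G A) (Imp G C)))" using w by (intro ax_S)
  then show ?thesis using a b r_mp by blast
qed

lemma comp: "prov (Imp A B) \<Longrightarrow> prov (Imp B C) \<Longrightarrow> prov (Imp A C)"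
proof -
  assume a: "prov (Imp A B)" and b: "prov (Imp B C)"
  have "wf A" using prov_wf[OF a] by simp
  then have "prov (Imp A (Imp B C))" using weak b by blast
  then show ?thesis using mp_under a by blast
qed

lemma andI_u: "prov (Imp G A) \<Longrightarrow> prov (Imp G B) \<Longrightarrow> prov (Imp G (And A B))"
proof -
  assume a: "prov (Imp G A)" and b: "prov (Imp G B)"
  have w: "wf A" "wf B" using prov_wf[OF a] prov_wf[OF b] by auto
  have "prov (Imp A (Imp B (And A B)))" using w by (intro ax_andI)
  then show ?thesis using a b comp mp_under by blast
qed

lemma andE1_u: "prov (Imp G (And A B)) \<Longrightarrow> prov (Imp G A)"
proof -
  assume a: "prov (Imp G (And A B))"
  have "wf A" "wf B" using prov_wf[OF a] by auto
  then show ?thesis using comp[OF a ax_andE1] by blast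
qed
lemma andE2_u: "prov (Imp G (And A B)) \<Longrightarrow> prov (Imp G B)"
proof -
  assume a: "prov (Imp G (And A B))"
  have "wf A" "wf B" using prov_wf[OF a] by auto
  then show ?thesis using comp[OF a ax_andE2] by blast
qed

lemma hyp1: "wf G \<Longrightarrow> wf A \<Longrightarrow> prov (Imp (And G A) A)" by (rule ax_andE2)
lemma hyp0: "wf G \<Longrightarrow> wf A \<Longrightarrow> prov (Imp (And G A) G)" by (rule ax_andE1)

lemma curry: "prov (Imp (And A B) C) \<Longrightarrow> prov (Imp A (Imp B C))"
proof -
  assume h: "prov (Imp (And A B) C)"
  have w: "wf A" "wf B" "wf C" using prov_wf[OF h] by auto
  have 1: "prov (Imp A (Imp B (And A B)))" using w by (intro ax_andI)
  have 2: "prov (Imp A (Imp B (Imp (And A B) C)))" using w h weak by simp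
  have 3: "prov (Imp A (Imp (Imp B (Imp (And A B) C)) (Imp (Imp B (And A B)) (Imp B C))))"
    using w by (intro weak[OF ax_S]) auto
  show ?thesis using mp_under[OF 1 mp_under[OF 2 3]] .
qed

lemma uncurry: "prov (Imp A (Imp B C)) \<Longrightarrow> prov (Imp (And A B) C)"
proof -
  assume h: "prov (Imp A (Imp B C))"
  have w: "wf A" "wf B" "wf C" using prov_wf[OF h] by auto
  have "prov (Imp (And A B) (Imp B C))" using comp[OF ax_andE1 h] w by auto
  moreover have "prov (Imp (And A B) B)" using w by (intro ax_andE2)
  ultimately show ?thesis using mp_under by blast
qed

lemma orE_u: "prov (Imp G (Or A B)) \<Longrightarrow> prov (Imp (And G A) C) \<Longrightarrow> prov (Imp (And G B) C) \<Longrightarrow> prov (Imp G C)"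
proof -
  assume o: "prov (Imp G (Or A B))" and a: "prov (Imp (And G A) C)" and b: "prov (Imp (And G B) C)"
  have w: "wf G" "wf A" "wf B" "wf C" using prov_wf[OF o] prov_wf[OF a] by auto
  have a': "prov (Imp G (Imp A C))" using curry[OF a] .
  have b': "prov (Imp G (Imp B C))" using curry[OF b] .
  have ax: "prov (Imp G (Imp (Imp A C) (Imp (Imp B C) (Imp (Or A B) C))))"
    using w by (intro weak[OF ax_orE]) auto
  show ?thesis using mp_under[OF o mp_under[OF b' mp_under[OF a' ax]]] .
qed

lemma botE_u: "prov (Imp G Bot) \<Longrightarrow> wf A \<Longrightarrow> prov (Imp G A)"
  using comp ax_botE by blast

lemma iffI': "prov (Imp A B) \<Longrightarrow> prov (Imp B A) \<Longrightarrow> prov (Iff A B)"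
proof -
  assume a: "prov (Imp A B)" and b: "prov (Imp B A)"
  have "wf (Imp A B)" "wf (Imp B A)" using prov_wf[OF a] prov_wf[OF b] .
  then have "prov (Imp (Imp A B) (Imp (Imp B A) (And (Imp A B) (Imp B A))))" by (intro ax_andI)
  then show ?thesis using a b r_mp unfolding Iff_def by blast
qed
lemma iffD1': "prov (Iff A B) \<Longrightarrow> prov (Imp A B)"
proof -
  assume a: "prov (Iff A B)"
  have "wf (Imp A B)" "wf (Imp B A)" using prov_wf[OF a] by (auto simp: Iff_def)
  then show ?thesis using a r_mp ax_andE1 unfolding Iff_def by blast
qed
lemma iffD2': "prov (Iff A B) \<Longrightarrow> prov (Imp B A)"
proof -
  assume a: "prov (Iff A B)"
  have "wf (Imp A B)" "wf (Imp B A)" using prov_wf[OF a] by (auto simp: Iff_def)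
  then show ?thesis using a r_mp ax_andE2 unfolding Iff_def by blast
qed

lemma inst: "prov (All v A) \<Longrightarrow> fits v t \<Longrightarrow> free_for t v A \<Longrightarrow> prov (subst v t A)"
proof -
  assume a: "prov (All v A)" "fits v t" "free_for t v A"
  have "wf A" using prov_wf[OF a(1)] by auto
  then show ?thesis using a r_mp ax_allE by blast
qed

lemma allL_strip_imp: "wf A \<Longrightarrow> prov (Imp (allL vs A) A)"
proof (induction vs)
  case Nil then show ?case by (simp add: imp_refl)
next
  case (Cons v vs)
  have "prov (Imp (All v (allL vs A)) (subst v (vt v) (allL vs A)))"
    using Cons by (intro ax_allE) auto
  then have "prov (Imp (All v (allL vs A)) (allL vs A))" by simp
  from comp[OF this Cons.IH[OF Cons.prems]] show ?case by simp
qed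

lemma allL_strip: "prov (allL vs A) \<Longrightarrow> prov A"
proof -
  assume a: "prov (allL vs A)"
  have "wf A" using prov_wf[OF a] by auto
  then show ?thesis using a r_mp allL_strip_imp by blast
qed

lemma allL_gen: "prov A \<Longrightarrow> prov (allL vs A)"
proof (induction vs)
  case (Cons v vs) then show ?case using r_gen by simp
qed simp



lemma allL_intro: "prov (Imp B A) \<Longrightarrow> \<forall>v\<in>set vs. v \<notin> fv B \<Longrightarrow> prov (Imp B (allL vs A))"
proof (induction vs)
  case (Cons v vs)
  then have "prov (Imp B (allL vs A))" by simp
  from r_allI[OF this, of v] Cons.prems show ?case by simp
qed simp



lemma exL_intro: "wf A \<Longrightarrow> prov (Imp A (exL vs A))"
proof (induction vs)
  case Nil then show ?case by (simp add: imp_refl)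
next
  case (Cons v vs)
  have "prov (Imp (subst v (vt v) (exL vs A)) (Ex v (exL vs A)))"
    using Cons by (intro ax_exI) auto
  then have "prov (Imp (exL vs A) (Ex v (exL vs A)))" by simp
  from comp[OF Cons.IH[OF Cons.prems] this] show ?case by simp
qed

lemma exL_elim: "prov (Imp A B) \<Longrightarrow> \<forall>v\<in>set vs. v \<notin> fv B \<Longrightarrow> prov (Imp (exL vs A) B)"
proof (induction vs)
  case (Cons v vs)
  then have "prov (Imp (exL vs A) B)" by simp
  from r_exE[OF this, of v] Cons.prems show ?case by simp
qed simp



lemma std_open:
  assumes "wf F" "sigma0 F" "pure F" "\<forall>ag ai. sat ag ai F"
  shows "prov F"
proof -
  obtain vs where vs: "set vs = fv F" using finite_list[OF finite_fv[of F]] by blast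
  have s: "\<forall>ag ai. sat ag ai (allL vs F)" using assms(4) sat_allL by blast
  have f: "fv (allL vs F) = {}" using vs by simp
  have "allL vs F \<in> Std" unfolding Std_def mem_Collect_eq
    using assms(1,2,3) s f by simp
  then show ?thesis using ax_std allL_strip by blast
qed



lemma pless_num[simp]: "pless (VNum i) (VNum j) = (i < j)" by (simp add: pless_def)
lemma VI_notin_VG[simp]: "VI k \<notin> VG ` A" by auto
lemma VG_notin_VI[simp]: "VG k \<notin> VI ` A" by auto
lemma VG_notin_ivars[simp]: "VG x \<notin> ivars a" by (induction a) auto

definition SS :: "nat list \<Rightarrow> nat list \<Rightarrow> form \<Rightarrow> nat list \<Rightarrow> gterm \<Rightarrow> form" where
  "SS X V F Y t = Start X V F (map GV Y @ map GV V @ [t])"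
definition PP :: "nat list \<Rightarrow> nat list \<Rightarrow> form \<Rightarrow> gterm \<Rightarrow> form" where
  "PP X V F t = exL (map VG X) (SS X V F X t)"

lemma wf_SS[simp]: "adm X V F \<Longrightarrow> length Y = length X \<Longrightarrow> wf (SS X V F Y (GI a))"
  by (simp add: SS_def adm_def)
lemma wf_PP[simp]: "adm X V F \<Longrightarrow> wf (PP X V F (GI a))"
  by (simp add: PP_def)
lemma fv_SS[simp]: "fv (SS X V F Y t) = VG ` set Y \<union> VG ` set V \<union> gvars t"
  by (auto simp: SS_def)
lemma fv_PP: "adm X V F \<Longrightarrow> fv (PP X V F (GI a)) = VG ` set V \<union> ivars a"
  by (auto simp: PP_def adm_def)
lemma subst_SS[simp]: "subst (VI k) s (SS X V F Y t) = SS X V F Y (gsubst (VI k) s t)"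
  by (simp add: SS_def)
lemma subst_PP[simp]: "subst (VI k) s (PP X V F t) = PP X V F (gsubst (VI k) s t)"
  by (simp add: PP_def)
lemma free_for_SS[simp]: "free_for s v (SS X V F Y t)"
  by (simp add: SS_def)
lemma free_for_PP[simp]: "free_for (GI a) v (PP X V F t)"
  unfolding PP_def by (rule free_for_exL) auto

lemma Lrw:
  assumes "prov (Cmp Eq (GI a) (GI b))" "adm X V F"
  shows "prov (Imp (PP X V F (GI a)) (PP X V F (GI b)))"
proof -
  have "prov (Imp (Cmp Eq (GI a) (GI b)) (Imp (subst (VI 0) (GI a) (PP X V F (ivar 0)))
          (subst (VI 0) (GI b) (PP X V F (ivar 0)))))"
    using assms(2) by (intro ax_eqsub) (auto simp: ivar_def)
  then have "prov (Imp (Cmp Eq (GI a) (GI b)) (Imp (PP X V F (GI a)) (PP X V F (GI b))))"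
    by (simp add: ivar_def)
  then show ?thesis using assms(1) r_mp by blast
qed

lemma rename_start:
  assumes "length xs = length us" "distinct xs" "set us \<inter> set xs = {}"
    "\<forall>x\<in>set xs. \<forall>s\<in>set pre \<union> set rest. VG x \<notin> gvars s"
    "wf (Start X V F (pre @ map GV xs @ rest))" "rest \<noteq> []"
  shows "prov (Imp (Start X V F (pre @ map GV us @ rest)) (exL (map VG xs) (Start X V F (pre @ map GV xs @ rest))))"
  using assms
proof (induction xs arbitrary: us pre)
  case Nil then show ?case by (simp add: imp_refl)
next
  case (Cons x xs)
  obtain u us' where us: "us = u # us'" using Cons.prems(1) by (cases us) auto
  have ih: "prov (Imp (Start X V F ((pre @ [GV u]) @ map GV us' @ rest))
      (exL (map VG xs) (Start X V F ((pre @ [GV u]) @ map GV xs @ rest))))"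
    apply (rule Cons.IH)
    using Cons.prems us by (auto simp: last_append)
  let ?T = "exL (map VG xs) (Start X V F (pre @ GV x # map GV xs @ rest))"
  have ex: "prov (Imp (subst (VG x) (GV u) ?T) (Ex (VG x) ?T))"
    apply (rule ax_exI)
    using Cons.prems us apply auto[2]
    apply (rule free_for_exL)
    using Cons.prems us by auto
  have m1: "map (gsubst (VG x) (GV u)) pre = pre"
    using Cons.prems(4) by (intro map_gsubst_noop) auto
  have m2: "map (gsubst (VG x) (GV u)) rest = rest"
    using Cons.prems(4) by (intro map_gsubst_noop) auto
  have m3: "map (gsubst (VG x) (GV u)) (map GV xs) = map GV xs"
    using Cons.prems(2) by (intro map_gsubst_noop) auto
  have "subst (VG x) (GV u) ?T = exL (map VG xs) (Start X V F (pre @ GV u # map GV xs @ rest))"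
  proof -
    have nx: "VG x \<notin> set (map VG xs)" using Cons.prems(2) by auto
    show ?thesis unfolding subst_exL[OF nx] using m1 m2 m3 by (simp del: map_map)
  qed
  with ex have ex': "prov (Imp (exL (map VG xs) (Start X V F (pre @ GV u # map GV xs @ rest))) (Ex (VG x) ?T))"
    by simp
  have ih': "prov (Imp (Start X V F (pre @ GV u # map GV us' @ rest))
      (exL (map VG xs) (Start X V F (pre @ GV u # map GV xs @ rest))))" using ih by simp
  show ?case using comp[OF ih' ex'] us by simp
qed

lemma rename_SS:
  assumes "adm X V F" "length U = length X" "set U \<inter> (set X \<union> set V) = {}"
  shows "prov (Imp (SS X V F U (GI a)) (PP X V F (GI a)))"
proof -
  have "prov (Imp (Start X V F ([] @ map GV U @ (map GV V @ [GI a])))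
     (exL (map VG X) (Start X V F ([] @ map GV X @ (map GV V @ [GI a])))))"
    apply (rule rename_start)
    using assms by (auto simp: adm_def)
  then show ?thesis by (simp add: SS_def PP_def)
qed



lemma fresh_list: "\<exists>U. length U = length (X::nat list) \<and> distinct U \<and> set U \<inter> (set X \<union> set (V::nat list)) = {}"
proof -
  define M where "M = Max (set X \<union> set V \<union> {0})"
  have bound: "\<forall>z\<in>set X \<union> set V. z \<le> M" unfolding M_def by auto
  have nz: "z \<notin> set X \<union> set V" if "Suc M \<le> z" for z
    using bound that by (meson not_less_eq_eq)
  have "set [Suc M..<Suc M + length X] \<inter> (set X \<union> set V) = {}"
    using nz by auto
  then show ?thesis by (rule_tac x="[Suc M..<Suc M + length X]" in exI) (auto simp: Suc_le_eq)
qed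

lemma noVI_fv: "adm X V F \<Longrightarrow> VI k \<notin> fv F"
  by (auto simp: adm_def)

lemma Lone:
  assumes adm: "adm X V F"
  shows "prov (Imp (PP X V F (GI (IPlus r (INum 1)))) (PP X V F (GI r)))"
proof -
  obtain U where U: "length U = length X" "distinct U" "set U \<inter> (set X \<union> set (V::nat list)) = {}"
    using fresh_list by blast
  let ?H = "SS X V F X (GI (IPlus r (INum 1)))"
  let ?C = "PP X V F (GI r)"
  let ?Le = "Cmp Le (GI r) (num 0)"
  let ?Gt = "Cmp Gt (GI r) (num 0)"
  have wH: "wf ?H" using adm by simp
  have wC: "wf ?C" using adm by simp
  have "prov (Or ?Le ?Gt)" by (rule std_open) (auto simp: num_def)
  then have a: "prov (Imp ?H (Or ?Le ?Gt))" using wH by (rule weak)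
  have d0a: "prov (allL (map VG X) (allL (map VG V) (All (VI 0)
     (Imp (Cmp Le (ivar 0) (num 0)) (Start X V F (map GV X @ map GV V @ [ivar 0]))))))"
    using ax_d0a[OF adm, of 0] by simp
  have "prov (All (VI 0) (Imp (Cmp Le (ivar 0) (num 0)) (SS X V F X (ivar 0))))"
    using allL_strip[OF allL_strip[OF d0a]] by (simp add: SS_def)
  from inst[OF this, of "GI r"] have le1: "prov (Imp ?Le (SS X V F X (GI r)))"
    by (simp add: ivar_def num_def)
  have le2: "prov (Imp (SS X V F X (GI r)) ?C)"
    unfolding PP_def using adm by (intro exL_intro) simp
  have b: "prov (Imp (And ?H ?Le) ?C)"
    using comp[OF comp[OF hyp1 le1] le2] wH by (simp add: num_def)
  let ?E = "exL (map VG U) (And (lexless X U) (SS X V F U (GI r)))"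
  have d0c: "prov (allL (map VG X) (allL (map VG V) (All (VI 0)
     (Imp (Cmp Gt (ivar 0) (num 0))
         (Iff (Start X V F (map GV X @ map GV V @ [succ 0]))
              (And F (exL (map VG U)
                 (And (lexless X U) (Start X V F (map GV U @ map GV V @ [ivar 0]))))))))))"
    using ax_d0c[OF adm U(1) U(2) U(3), of 0] by simp
  have "prov (All (VI 0) (Imp (Cmp Gt (ivar 0) (num 0))
         (Iff (SS X V F X (succ 0)) (And F (exL (map VG U) (And (lexless X U) (SS X V F U (ivar 0))))))))"
    using allL_strip[OF allL_strip[OF d0c]] by (simp add: SS_def)
  from inst[OF this, of "GI r"] have gt1: "prov (Imp ?Gt (Iff ?H (And F ?E)))"
    using noVI_fv[OF adm, of 0] by (simp add: ivar_def num_def succ_def Iff_def subst_noop free_for_noop)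
  have wGt: "wf ?Gt" by simp
  have g1: "prov (Imp (And ?H ?Gt) (And (Imp ?H (And F ?E)) (Imp (And F ?E) ?H)))"
    using comp[OF hyp1[OF wH wGt] gt1] by (simp add: Iff_def)
  have g2: "prov (Imp (And ?H ?Gt) (And F ?E))"
    using mp_under[OF hyp0[OF wH wGt] andE1_u[OF g1]] .
  have g3: "prov (Imp (And ?H ?Gt) ?E)" using andE2_u[OF g2] .
  have ren: "prov (Imp (SS X V F U (GI r)) ?C)" using rename_SS[OF adm U(1) U(3)] .
  have g4: "prov (Imp (And (lexless X U) (SS X V F U (GI r))) ?C)"
    using comp[OF ax_andE2[OF wf_lexless wf_SS[OF adm U(1)]] ren] .
  have fr: "\<forall>v\<in>set (map VG U). v \<notin> fv ?C" using fv_PP[OF adm] U(3) by auto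
  have g5: "prov (Imp ?E ?C)" using exL_elim[OF g4 fr] .
  have c: "prov (Imp (And ?H ?Gt) ?C)" using comp[OF g3 g5] .
  have "prov (Imp ?H ?C)" using orE_u[OF a b c] .
  moreover have "\<forall>v\<in>set (map VG X). v \<notin> fv ?C" using fv_PP[OF adm] adm by (auto simp: adm_def)
  ultimately have "prov (Imp (exL (map VG X) ?H) ?C)" by (rule exL_elim)
  then show ?thesis by (simp add: PP_def)
qed



lemma Ldown:
  assumes adm: "adm X V F"
  shows "prov (Imp (And (PP X V F (ivar m)) (Cmp Ge (ivar m) (ivar n))) (PP X V F (ivar n)))"
proof -
  define d where "d = Suc m"
  have md: "m \<noteq> d" unfolding d_def by simp
  let ?Phi = "PP X V F (GI (IMinus (IV m) (IV d)))"
  let ?PhiZ = "PP X V F (GI (IMinus (IV m) (INum 0)))"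
  let ?r = "IMinus (IV m) (IPlus (IV d) (INum 1))"
  let ?Phis = "PP X V F (GI ?r)"
  let ?Ged = "Cmp Ge (ivar d) (num 0)"
  have ind0: "prov (Imp (And (subst (VI d) (num 0) ?Phi)
          (All (VI d) (Imp (And ?Ged ?Phi) (subst (VI d) (succ d) ?Phi))))
     (All (VI d) (Imp ?Ged ?Phi)))"
    using adm by (intro ax_ind) simp
  have ind: "prov (Imp (And ?PhiZ (All (VI d) (Imp (And ?Ged ?Phi) ?Phis))) (All (VI d) (Imp ?Ged ?Phi)))"
    using ind0 md by (simp add: num_def succ_def)
  have eq1: "prov (Cmp Eq (GI (IMinus (IV m) (IV d))) (GI (IPlus ?r (INum 1))))"
    by (rule std_open) auto
  have st1: "prov (Imp ?Phi ?Phis)" using comp[OF Lrw[OF eq1 adm] Lone[OF adm]] .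
  have wGed: "wf ?Ged" by simp
  have wPhi: "wf ?Phi" using adm by simp
  have st2: "prov (Imp (And ?Ged ?Phi) ?Phis)" using comp[OF ax_andE2[OF wGed wPhi] st1] .
  have step: "prov (All (VI d) (Imp (And ?Ged ?Phi) ?Phis))" using r_gen[OF st2] .
  have eq0: "prov (Cmp Eq (GI (IV m)) (GI (IMinus (IV m) (INum 0))))"
    by (rule std_open) auto
  have base: "prov (Imp (PP X V F (ivar m)) ?PhiZ)" using Lrw[OF eq0 adm] by (simp add: ivar_def)
  let ?G = "And (PP X V F (ivar m)) (Cmp Ge (ivar m) (ivar n))"
  have wPm: "wf (PP X V F (ivar m))" using adm by (simp add: ivar_def)
  have wGe: "wf (Cmp Ge (ivar m) (ivar n))" by simp
  have wG: "wf ?G" using wPm wGe by simp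
  have g1: "prov (Imp ?G ?PhiZ)" using comp[OF ax_andE1[OF wPm wGe] base] .
  have g2: "prov (Imp ?G (All (VI d) (Imp (And ?Ged ?Phi) ?Phis)))" using weak[OF step wG] .
  have g3: "prov (Imp ?G (All (VI d) (Imp ?Ged ?Phi)))" using comp[OF andI_u[OF g1 g2] ind] .
  let ?t = "GI (IMinus (IV m) (IV n))"
  have ae: "prov (Imp (All (VI d) (Imp ?Ged ?Phi)) (subst (VI d) ?t (Imp ?Ged ?Phi)))"
    using adm by (intro ax_allE) auto
  have ae': "prov (Imp (All (VI d) (Imp ?Ged ?Phi))
     (Imp (Cmp Ge ?t (num 0)) (PP X V F (GI (IMinus (IV m) (IMinus (IV m) (IV n)))))))"
    using ae md by (simp add: ivar_def num_def)
  have g4: "prov (Imp ?G (Imp (Cmp Ge ?t (num 0)) (PP X V F (GI (IMinus (IV m) (IMinus (IV m) (IV n)))))))"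
    using comp[OF g3 ae'] .
  have ge: "prov (Imp (Cmp Ge (ivar m) (ivar n)) (Cmp Ge ?t (num 0)))"
    by (rule std_open) (auto simp: ivar_def num_def)
  have g5: "prov (Imp ?G (Cmp Ge ?t (num 0)))" using comp[OF ax_andE2[OF wPm wGe] ge] .
  have g6: "prov (Imp ?G (PP X V F (GI (IMinus (IV m) (IMinus (IV m) (IV n))))))"
    using mp_under[OF g5 g4] .
  have eq2: "prov (Cmp Eq (GI (IMinus (IV m) (IMinus (IV m) (IV n)))) (GI (IV n)))"
    by (rule std_open) auto
  have "prov (Imp ?G (PP X V F (GI (IV n))))" using comp[OF g6 Lrw[OF eq2 adm]] .
  then show ?thesis by (simp add: ivar_def)
qed



lemma fresh_y: "\<exists>y::nat. y \<notin> set X \<union> set V"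
  using ex_new_if_finite[OF infinite_UNIV_nat, of "set X \<union> set V"] by auto

lemma map_gsubst_GV: "y \<notin> set V \<Longrightarrow> map (gsubst (VG y) t) (map GV V) = map GV V"
  by (intro map_gsubst_noop) auto

lemma d1a_inst:
  assumes adm: "adm X V F" and m: "VI m \<notin> ivars a"
  shows "prov (Iff (AtLeast X V F (map GV V @ [GI a]))
     (exL (map VG X @ [VI m]) (And (SS X V F X (ivar m)) (Cmp Ge (ivar m) (GI a)))))"
proof -
  obtain y where y: "y \<notin> set X \<union> set V" using fresh_y by blast
  let ?B = "Iff (AtLeast X V F (map GV V @ [GV y]))
            (exL (map VG X @ [VI m])
               (And (Start X V F (map GV X @ map GV V @ [ivar m])) (Cmp Ge (ivar m) (GV y))))"
  have "prov (allL (map VG V) (All (VG y) ?B))"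
    using ax_d1a[OF adm y, of m] by simp
  then have "prov (All (VG y) ?B)" by (rule allL_strip)
  then have "prov (subst (VG y) (GI a) ?B)"
    apply (rule inst)
     apply simp
    unfolding Iff_def using m by (simp add: ivar_def)
  moreover have "VG y \<notin> set (map VG X)" using y by auto
  ultimately show ?thesis using y
    by (simp add: Iff_def ivar_def SS_def map_gsubst_GV del: map_map)
qed

lemma d1b_inst:
  assumes adm: "adm X V F" and m: "VI m \<notin> ivars a"
  shows "prov (Iff (AtMost X V F (map GV V @ [GI a]))
     (allL (map VG X @ [VI m]) (Imp (SS X V F X (ivar m)) (Cmp Le (ivar m) (GI a)))))"
proof -
  obtain y where y: "y \<notin> set X \<union> set V" using fresh_y by blast
  let ?B = "Iff (AtMost X V F (map GV V @ [GV y]))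
            (allL (map VG X @ [VI m])
               (Imp (Start X V F (map GV X @ map GV V @ [ivar m])) (Cmp Le (ivar m) (GV y))))"
  have "prov (allL (map VG V) (All (VG y) ?B))"
    using ax_d1b[OF adm y, of m] by simp
  then have "prov (All (VG y) ?B)" by (rule allL_strip)
  then have "prov (subst (VG y) (GI a) ?B)"
    apply (rule inst)
     apply simp
    unfolding Iff_def using m by (simp add: ivar_def)
  moreover have "VG y \<notin> set (map VG X)" using y by auto
  ultimately show ?thesis using y
    by (simp add: Iff_def ivar_def SS_def map_gsubst_GV del: map_map)
qed



theorem proposition1:
  fixes X V :: "nat list" and F :: form and n :: nat
  assumes "adm X V F"
  shows "prov (allL (map VG V @ [VI n])
            (Iff (AtLeast X V F (map GV V @ [ivar n]))
                 (exL (map VG X) (Start X V F (map GV X @ map GV V @ [ivar n])))))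
       \<and> prov (allL (map VG V @ [VI n])
            (Iff (AtMost X V F (map GV V @ [ivar n]))
                 (Neg (AtLeast X V F (map GV V @ [succ n])))))"
proof -
  note adm = assms
  define m where "m = Suc n"
  have mn: "m \<noteq> n" unfolding m_def by simp
  have fvX: "\<forall>v\<in>set (map VG X). v \<notin> VG ` set V" using adm by (auto simp: adm_def)
  let ?S = "SS X V F X (ivar m)"
  have wS: "wf ?S" using adm by (simp add: ivar_def)
  let ?AL = "AtLeast X V F (map GV V @ [ivar n])"
  let ?Ge = "Cmp Ge (ivar m) (ivar n)"
  let ?Pn = "PP X V F (ivar n)"
  have wGe: "wf ?Ge" by simp
  have wAL: "wf ?AL" using adm by (simp add: adm_def)
  have D: "prov (Iff ?AL (exL (map VG X @ [VI m]) (And ?S ?Ge)))"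
    using d1a_inst[OF adm, of m "IV n"] mn by (simp add: ivar_def)
  have p1: "prov (Imp (And ?S ?Ge) (And (PP X V F (ivar m)) ?Ge))"
  proof (rule andI_u)
    show "prov (Imp (And ?S ?Ge) (PP X V F (ivar m)))"
      using comp[OF ax_andE1[OF wS wGe] exL_intro[OF wS, of "map VG X"]] by (simp add: PP_def)
    show "prov (Imp (And ?S ?Ge) ?Ge)" using ax_andE2[OF wS wGe] .
  qed
  have p2: "prov (Imp (And ?S ?Ge) ?Pn)" using comp[OF p1 Ldown[OF adm]] .
  have frPn: "\<forall>v\<in>set (map VG X @ [VI m]). v \<notin> fv ?Pn"
    using fv_PP[OF adm, of "IV n"] fvX mn by (auto simp: ivar_def)
  have p3: "prov (Imp (exL (map VG X @ [VI m]) (And ?S ?Ge)) ?Pn)"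
    using exL_elim[OF p2 frPn] .
  have part1a: "prov (Imp ?AL ?Pn)" using comp[OF iffD1'[OF D] p3] .
  let ?Sn = "SS X V F X (ivar n)"
  have wSn: "wf ?Sn" using adm by (simp add: ivar_def)
  have gen: "prov (Cmp Ge (ivar n) (ivar n))" by (rule std_open) (auto simp: ivar_def)
  have q1: "prov (Imp ?Sn (And ?Sn (Cmp Ge (ivar n) (ivar n))))"
    using andI_u[OF imp_refl[OF wSn] weak[OF gen wSn]] .
  have q2: "prov (Imp (subst (VI m) (ivar n) (And ?S ?Ge)) (Ex (VI m) (And ?S ?Ge)))"
    using wS by (intro ax_exI) (auto simp: ivar_def)
  have q2': "prov (Imp (And ?Sn (Cmp Ge (ivar n) (ivar n))) (Ex (VI m) (And ?S ?Ge)))"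
    using q2 mn by (simp add: ivar_def)
  have q3: "prov (Imp (Ex (VI m) (And ?S ?Ge)) (exL (map VG X @ [VI m]) (And ?S ?Ge)))"
    using exL_intro[of "Ex (VI m) (And ?S ?Ge)" "map VG X"] wS by simp
  have q4: "prov (Imp ?Sn ?AL)" using comp[OF comp[OF q1 q2'] comp[OF q3 iffD2'[OF D]]] .
  have frAL: "\<forall>v\<in>set (map VG X). v \<notin> fv ?AL" using fvX by (auto simp: ivar_def)
  have part1b: "prov (Imp ?Pn ?AL)" using exL_elim[OF q4 frAL] by (simp add: PP_def)
  have part1: "prov (Iff ?AL ?Pn)" using iffI'[OF part1a part1b] .
  let ?AM = "AtMost X V F (map GV V @ [ivar n])"
  let ?AL1 = "AtLeast X V F (map GV V @ [succ n])"
  let ?Ge1 = "Cmp Ge (ivar m) (succ n)"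
  let ?Le = "Cmp Le (ivar m) (ivar n)"
  let ?A = "allL (map VG X @ [VI m]) (Imp ?S ?Le)"
  let ?E = "exL (map VG X @ [VI m]) (And ?S ?Ge1)"
  have D1: "prov (Iff ?AL1 ?E)"
    using d1a_inst[OF adm, of m "IPlus (IV n) (INum 1)"] mn by (simp add: ivar_def succ_def)
  have D2: "prov (Iff ?AM ?A)"
    using d1b_inst[OF adm, of m "IV n"] mn by (simp add: ivar_def)
  have wGe1: "wf ?Ge1" by simp
  have wLe: "wf ?Le" by simp
  have wA: "wf ?A" using wS by simp
  have wAM: "wf ?AM" using adm by (simp add: adm_def)
  have wAL1: "wf ?AL1" using adm by (simp add: adm_def)
  have wSG: "wf (And ?S ?Ge1)" using wS by simp
  let ?C = "And (And ?S ?Ge1) ?A"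
  have c1: "prov (Imp ?C (Imp ?S ?Le))"
    using comp[OF ax_andE2[OF wSG wA] allL_strip_imp[of "Imp ?S ?Le" "map VG X @ [VI m]"]] wS by simp
  have c2: "prov (Imp ?C ?S)" using comp[OF ax_andE1[OF wSG wA] ax_andE1[OF wS wGe1]] .
  have c3: "prov (Imp ?C ?Le)" using mp_under[OF c2 c1] .
  have c4: "prov (Imp ?C ?Ge1)" using comp[OF ax_andE1[OF wSG wA] ax_andE2[OF wS wGe1]] .
  have bot: "prov (Imp (And ?Le ?Ge1) Bot)"
    by (rule std_open) (auto simp: ivar_def succ_def)
  have c5: "prov (Imp ?C Bot)" using comp[OF andI_u[OF c3 c4] bot] .
  have c6: "prov (Imp (And ?S ?Ge1) (Imp ?A Bot))" using curry[OF c5] .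
  have frA: "\<forall>v\<in>set (map VG X @ [VI m]). v \<notin> fv (Imp ?A Bot)" by simp
  have c7: "prov (Imp ?E (Imp ?A Bot))" using exL_elim[OF c6 frA] .
  let ?K = "And ?AM ?AL1"
  have k1: "prov (Imp ?K (Imp ?A Bot))"
    using comp[OF comp[OF ax_andE2[OF wAM wAL1] iffD1'[OF D1]] c7] .
  have k2: "prov (Imp ?K ?A)" using comp[OF ax_andE1[OF wAM wAL1] iffD1'[OF D2]] .
  have k3: "prov (Imp ?K Bot)" using mp_under[OF k2 k1] .
  have fwd: "prov (Imp ?AM (Neg ?AL1))" using curry[OF k3] by (simp add: Neg_def)
  let ?N = "Neg ?AL1"
  have wN: "wf ?N" using wAL1 by (simp add: Neg_def)
  let ?K2 = "And ?N ?S"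
  have wK2: "wf ?K2" using wN wS by simp
  have orf: "prov (Or ?Le ?Ge1)" by (rule std_open) (auto simp: ivar_def succ_def)
  have o1: "prov (Imp ?K2 (Or ?Le ?Ge1))" using weak[OF orf wK2] .
  have o2: "prov (Imp (And ?K2 ?Le) ?Le)" using ax_andE2[OF wK2 wLe] .
  let ?K3 = "And ?K2 ?Ge1"
  have e1: "prov (Imp ?K3 ?S)" using comp[OF ax_andE1[OF wK2 wGe1] ax_andE2[OF wN wS]] .
  have e2: "prov (Imp ?K3 (And ?S ?Ge1))" using andI_u[OF e1 ax_andE2[OF wK2 wGe1]] .
  have e3: "prov (Imp ?K3 ?AL1)"
    using comp[OF comp[OF e2 exL_intro[OF wSG, of "map VG X @ [VI m]"]] iffD2'[OF D1]] .
  have e4: "prov (Imp ?K3 (Imp ?AL1 Bot))"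
    using comp[OF ax_andE1[OF wK2 wGe1] ax_andE1[OF wN wS]] by (simp add: Neg_def)
  have e5: "prov (Imp ?K3 ?Le)" using botE_u[OF mp_under[OF e3 e4] wLe] .
  have o3: "prov (Imp ?K2 ?Le)" using orE_u[OF o1 o2 e5] .
  have b1: "prov (Imp ?N (Imp ?S ?Le))" using curry[OF o3] .
  have frN: "\<forall>v\<in>set (map VG X @ [VI m]). v \<notin> fv ?N"
    using fvX mn by (auto simp: Neg_def ivar_def succ_def)
  have b2: "prov (Imp ?N ?A)" using allL_intro[OF b1 frN] .
  have bwd: "prov (Imp ?N ?AM)" using comp[OF b2 iffD2'[OF D2]] .
  have part2: "prov (Iff ?AM ?N)" using iffI'[OF fwd bwd] .
  show ?thesis
    using allL_gen[OF part1, of "map VG V @ [VI n]"] allL_gen[OF part2, of "map VG V @ [VI n]"]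
    by (simp add: PP_def SS_def)
qed


end
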